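(* $G^{p}$ is a subspace of $L^{p}(\mu)$.
   Context: Let $\mathcal{B}$ be the Borel $\sigma$-algebra of $\mathbb{R}$, $\lambda$ the Lebesgue measure, and $\mathcal{B}_{\infty}$ the $\sigma$-algebra on $\mathbb{R}^{\mathbb{N}}$ generated by the cylinder sets $\prod_{i=1}^{m}C_{i}\times\prod_{i=m+1}^{\infty}\mathbb{R}$ with $C_i\in\mathcal{B}$, $m\in\mathbb{N}$. Let $\mathcal{F}(\mathcal{B},\lambda)$ be the set of finite rectangles $\prod_{i\in\mathbb{N}}C_{i}$ with $C_i\in\mathcal{B}$ and $\prod_{i}\lambda(C_i)\in[0,\infty)$, with $\mathrm{vol}(\prod_{i}C_i):=\prod_i\lambda(C_i)$. The measure $\mu$ is the restriction to $\mathcal{B}_{\infty}$ of the outer measure $\mu^{\ast}(A):=\inf\{\sum_{n}\mathrm{vol}(\mathscr{C}_{n}) : \mathscr{C}_{n}\in\mathcal{F}(\mathcal{B},\lambda),\ A\subset\bigcup_{n}\mathscr{C}_{n}\}$ ($\inf\varnothing=\infty$). Fix $1\le p<\infty$. Let $I:=\mathbb{Z}^{\mathbb{N}}$ and, for $\mathfrak{a}=(a_n)\in I$, $\mathcal{C}_{\mathfrak{a}}:=\prod_{n\in\mathbb{N}}[a_{n},a_{n}+1)$. For $f\in L^p(\mu)$ let $\mathcal{O}_{f}:=\{\mathfrak{a}\in I : \int_{\mathcal{C}_{\mathfrak{a}}}|f|^{p}\,d\mu\neq 0\}$ (a countable set) and $\mathcal{F}_{f}:=\bigsqcup_{\mathfrak{a}\in\mathcal{O}_{f}}\mathcal{C}_{\mathfrak{a}}$.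 Define $G^{p}:=\{f\in L^{p}(\mu) : \int_{\mathbb{R}^{\mathbb{N}}}|f|^{p}\,d\mu=\sum_{\mathfrak{a}\in\mathcal{O}_{f}}\int_{\mathcal{C}_{\mathfrak{a}}}|f|^{p}\,d\mu=\int_{\mathcal{F}_{f}}|f|^{p}\,d\mu\}$. *)

theory Defs
  imports "HOL-Analysis.Analysis"
begin

text \<open>Points of R^N are sequences x :: nat => real (coordinates indexed from 0).\<close>

definition Binf :: "(nat \<Rightarrow> real) set set" where
  "Binf = sigma_sets UNIV
     {{x. \<forall>i<m. x i \<in> C i} | (C :: nat \<Rightarrow> real set) m. \<forall>i<m. C i \<in> sets borel}"

definition rect :: "(nat \<Rightarrow> real set) \<Rightarrow> (nat \<Rightarrow> real) set" where
  "rect C = {x. \<forall>i. x i \<in> C i}"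

definition partial_vol :: "(nat \<Rightarrow> real set) \<Rightarrow> nat \<Rightarrow> ennreal" where
  "partial_vol C n = (\<Prod>i<n. emeasure lborel (C i))"

definition fin_rect :: "(nat \<Rightarrow> real set) \<Rightarrow> bool" where
  "fin_rect C \<longleftrightarrow> (\<forall>i. C i \<in> sets borel) \<and>
     (\<exists>v. v < \<infinity> \<and> partial_vol C \<longlonglongrightarrow> v)"

definition vol :: "(nat \<Rightarrow> real set) \<Rightarrow> ennreal" where
  "vol C = lim (partial_vol C)"

text \<open>The outer measure mu^* (Inf of the empty set is infinity).\<close>
definition mu_star :: "(nat \<Rightarrow> real) set \<Rightarrow> ennreal" where
  "mu_star A = Inf {(\<Sum>n. vol (C n)) | C :: nat \<Rightarrow> nat \<Rightarrow> real set.
                      (\<forall>n. fin_rect (C n)) \<and> A \<subseteq> (\<Union>n. rect (C n))}"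

definition mu :: "(nat \<Rightarrow> real) measure" where
  "mu = measure_of UNIV Binf mu_star"

text \<open>L^p(mu), represented by functions (the defining condition of G^p is
  invariant under a.e. equality).\<close>
definition Lp :: "real \<Rightarrow> ((nat \<Rightarrow> real) \<Rightarrow> real) set" where
  "Lp p = {f. f \<in> borel_measurable mu \<and>
              (\<integral>\<^sup>+ x. ennreal (\<bar>f x\<bar> powr p) \<partial>mu) < \<infinity>}"

definition cube :: "(nat \<Rightarrow> int) \<Rightarrow> (nat \<Rightarrow> real) set" where
  "cube a = {x. \<forall>n. real_of_int (a n) \<le> x n \<and> x n < real_of_int (a n) + 1}"

definition Ofun :: "real \<Rightarrow> ((nat \<Rightarrow> real) \<Rightarrow> real) \<Rightarrow> (nat \<Rightarrow> int) set" where
  "Ofun p f = {a. (\<integral>\<^sup>+ x\<in>cube a. ennreal (\<bar>f x\<bar> powr p) \<partial>mu) \<noteq> 0}"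

definition Ffun :: "real \<Rightarrow> ((nat \<Rightarrow> real) \<Rightarrow> real) \<Rightarrow> (nat \<Rightarrow> real) set" where
  "Ffun p f = (\<Union>a\<in>Ofun p f. cube a)"

definition Gp :: "real \<Rightarrow> ((nat \<Rightarrow> real) \<Rightarrow> real) set" where
  "Gp p = {f \<in> Lp p.
     (\<integral>\<^sup>+ x. ennreal (\<bar>f x\<bar> powr p) \<partial>mu) =
       (\<integral>\<^sup>+ a. (\<integral>\<^sup>+ x\<in>cube a. ennreal (\<bar>f x\<bar> powr p) \<partial>mu) \<partial>count_space (Ofun p f))
     \<and> (\<integral>\<^sup>+ a. (\<integral>\<^sup>+ x\<in>cube a. ennreal (\<bar>f x\<bar> powr p) \<partial>mu) \<partial>count_space (Ofun p f)) =
       (\<integral>\<^sup>+ x\<in>Ffun p f. ennreal (\<bar>f x\<bar> powr p) \<partial>mu)}"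

end

theory Submission imports Defs begin

lemma sets_mu: "sets mu = Binf"
proof -
  have "Binf \<subseteq> Pow UNIV" by auto
  then have "sets mu = sigma_sets UNIV Binf" unfolding mu_def by (simp add: sets_measure_of)
  also have "\<dots> = Binf" unfolding Binf_def by (rule sigma_sets_sigma_sets_eq) auto
  finally show ?thesis .
qed

lemma space_mu: "space mu = UNIV"
  unfolding mu_def by (simp add: space_measure_of_conv)

lemma cube_sets: "cube a \<in> sets mu"
proof -
  have cyl: "{x. real_of_int (a n) \<le> x n \<and> x n < real_of_int (a n) + 1} \<in> sets mu" for n
  proof -
    define C where "C = (\<lambda>i. if i = n then {real_of_int (a n)..<real_of_int (a n) + 1} else (UNIV::real set))"
    have "{x. real_of_int (a n) \<le> x n \<and> x n < real_of_int (a n) + 1} = {x. \<forall>i<Suc n. x i \<in> C i}"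
      by (auto simp: C_def)
    moreover have "\<forall>i<Suc n. C i \<in> sets borel" by (auto simp: C_def)
    ultimately have "{x. real_of_int (a n) \<le> x n \<and> x n < real_of_int (a n) + 1} \<in> Binf"
      unfolding Binf_def by (intro sigma_sets.Basic) blast
    then show ?thesis by (simp add: sets_mu)
  qed
  have "cube a = (\<Inter>n. {x. real_of_int (a n) \<le> x n \<and> x n < real_of_int (a n) + 1})"
    unfolding cube_def by auto
  then show ?thesis using cyl by (simp add: sets.countable_INT')
qed

lemma cube_disj: "a \<noteq> b \<Longrightarrow> cube a \<inter> cube b = {}"
proof (rule ccontr)
  assume "a \<noteq> b" "cube a \<inter> cube b \<noteq> {}"
  then obtain x where x: "x \<in> cube a" "x \<in> cube b" by auto
  have "a n = b n" for n
  proof -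
    have "a n = floor (x n)" using x(1) unfolding cube_def by (auto intro!: floor_unique[symmetric])
    moreover have "b n = floor (x n)" using x(2) unfolding cube_def by (auto intro!: floor_unique[symmetric])
    ultimately show ?thesis by simp
  qed
  then show False using \<open>a \<noteq> b\<close> by auto
qed

lemma countable_support:
  fixes \<phi> :: "'a \<Rightarrow> ennreal"
  assumes fin: "(\<integral>\<^sup>+ a. \<phi> a \<partial>count_space Q) < \<infinity>" and nz: "\<forall>a\<in>Q. \<phi> a \<noteq> 0"
  shows "countable Q"
proof -
  define S where "S n = {a\<in>Q. ennreal (1 / real (Suc n)) \<le> \<phi> a}" for n
  have "Q \<subseteq> (\<Union>n. S n)"
  proof
    fix a assume a: "a \<in> Q"
    show "a \<in> (\<Union>n. S n)"
    proof (cases "\<phi> a = top")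
      case True then show ?thesis using a by (auto simp: S_def)
    next
      case False
      then obtain r where r: "\<phi> a = ennreal r" "r \<ge> 0" by (cases "\<phi> a") auto
      with nz a have "r > 0" by auto
      then obtain n where "inverse (real (Suc n)) < r" using reals_Archimedean by blast
      then have "ennreal (1 / real (Suc n)) \<le> \<phi> a" using r by (simp add: inverse_eq_divide)
      then show ?thesis using a by (auto simp: S_def)
    qed
  qed
  moreover have "finite (S n)" for n
  proof (rule ccontr)
    assume inf: "infinite (S n)"
    obtain m where m: "(\<integral>\<^sup>+ a. \<phi> a \<partial>count_space Q) < of_nat m"
      using ennreal_Ex_less_of_nat fin by auto
    obtain T where T: "finite T" "card T = Suc n * m" "T \<subseteq> S n"
      using infinite_arbitrarily_large[OF inf] by blast
    have "of_nat m = (\<Sum>a\<in>T. ennreal (1 / real (Suc n)))"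
    proof -
      have "(\<Sum>a\<in>T. ennreal (1 / real (Suc n))) = ennreal (real (card T) * (1 / real (Suc n)))"
        by (simp add: ennreal_of_nat_eq_real_of_nat ennreal_mult'[symmetric])
      also have "real (card T) * (1 / real (Suc n)) = real m" using T(2) by (simp add: field_simps)
      finally show ?thesis by (simp add: ennreal_of_nat_eq_real_of_nat)
    qed
    also have "\<dots> \<le> (\<Sum>a\<in>T. \<phi> a)" using T(3) by (intro sum_mono) (auto simp: S_def)
    also have "\<dots> = (\<integral>\<^sup>+ a. \<phi> a \<partial>count_space T)" using T(1) by (simp add: nn_integral_count_space_finite)
    also have "\<dots> \<le> (\<integral>\<^sup>+ a. \<phi> a \<partial>count_space Q)"
      using T(3) unfolding S_def
      by (subst (1 2) nn_integral_count_space_indicator) (auto intro!: nn_integral_mono split: split_indicator)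
    finally show False using m by simp
  qed
  ultimately show ?thesis by (meson countable_UN countable_finite countable_subset UNIV_I countableI_type)
qed

lemma L1:
  fixes h :: "(nat \<Rightarrow> real) \<Rightarrow> ennreal"
  assumes J: "countable J" and hm: "h \<in> borel_measurable mu"
  shows "(\<integral>\<^sup>+ x\<in>(\<Union>a\<in>J. cube a). h x \<partial>mu) = (\<integral>\<^sup>+ a. (\<integral>\<^sup>+ x\<in>cube a. h x \<partial>mu) \<partial>count_space J)"
proof -
  have "(\<integral>\<^sup>+ a. (\<integral>\<^sup>+ x\<in>cube a. h x \<partial>mu) \<partial>count_space J)
      = (\<integral>\<^sup>+ x. \<integral>\<^sup>+ a. h x * indicator (cube a) x \<partial>count_space J \<partial>mu)"
    using J hm cube_sets by (subst nn_integral_count_space_nn_integral) auto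
  also have "\<dots> = (\<integral>\<^sup>+ x. h x * indicator (\<Union>a\<in>J. cube a) x \<partial>mu)"
  proof (rule nn_integral_cong)
    fix x
    show "(\<integral>\<^sup>+ a. h x * indicator (cube a) x \<partial>count_space J) = h x * indicator (\<Union>a\<in>J. cube a) x"
    proof (cases "\<exists>b\<in>J. x \<in> cube b")
      case True
      then obtain b where b: "b \<in> J" "x \<in> cube b" by blast
      have "(\<integral>\<^sup>+ a. h x * indicator (cube a) x \<partial>count_space J) = (\<integral>\<^sup>+ a. h x * indicator {b} a \<partial>count_space J)"
      proof (rule nn_integral_cong)
        fix a show "h x * indicator (cube a) x = h x * indicator {b} a"
          using b cube_disj[of a b] by (cases "a = b") (auto split: split_indicator)
      qed
      also have "\<dots> = h x" using b by (subst nn_integral_cmult_indicator) auto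
      finally show ?thesis using b by (auto split: split_indicator)
    next
      case False
      have "(\<integral>\<^sup>+ a. h x * indicator (cube a) x \<partial>count_space J) = (\<integral>\<^sup>+ a. 0 \<partial>count_space J)"
        by (rule nn_integral_cong) (use False in \<open>auto split: split_indicator\<close>)
      then show ?thesis using False by (auto split: split_indicator)
    qed
  qed
  finally show ?thesis by simp
qed

lemma D1:
  assumes "f \<in> Gp p"
  shows "countable (Ofun p f) \<and> (AE x in mu. x \<notin> Ffun p f \<longrightarrow> f x = 0)"
proof -
  define h where "h x = ennreal (\<bar>f x\<bar> powr p)" for x
  define \<phi> where "\<phi> a = (\<integral>\<^sup>+ x\<in>cube a. h x \<partial>mu)" for a
  have fm: "f \<in> borel_measurable mu" and fin: "(\<integral>\<^sup>+ x. h x \<partial>mu) < \<infinity>"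
    and E1: "(\<integral>\<^sup>+ x. h x \<partial>mu) = (\<integral>\<^sup>+ a. \<phi> a \<partial>count_space (Ofun p f))"
    and E2: "(\<integral>\<^sup>+ a. \<phi> a \<partial>count_space (Ofun p f)) = (\<integral>\<^sup>+ x\<in>Ffun p f. h x \<partial>mu)"
    using assms unfolding Gp_def Lp_def h_def \<phi>_def by auto
  have hm: "h \<in> borel_measurable mu" unfolding h_def using fm by measurable
  have cO: "countable (Ofun p f)"
    proof (rule countable_support[where \<phi>=\<phi>])
    show "integral\<^sup>N (count_space (Ofun p f)) \<phi> < \<infinity>" using fin E1 by simp
    show "\<forall>a\<in>Ofun p f. \<phi> a \<noteq> 0" unfolding Ofun_def \<phi>_def h_def by simp
  qed
  have Fs: "Ffun p f \<in> sets mu" unfolding Ffun_def using cO cube_sets by (intro sets.countable_UN') auto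
  have "(\<integral>\<^sup>+ x. h x \<partial>mu) = (\<integral>\<^sup>+ x. h x * indicator (Ffun p f) x + h x * indicator (- Ffun p f) x \<partial>mu)"
    by (rule nn_integral_cong) (auto split: split_indicator)
  also have "\<dots> = (\<integral>\<^sup>+ x\<in>Ffun p f. h x \<partial>mu) + (\<integral>\<^sup>+ x. h x * indicator (- Ffun p f) x \<partial>mu)"
    using hm Fs by (intro nn_integral_add) auto
  finally have "(\<integral>\<^sup>+ x\<in>Ffun p f. h x \<partial>mu) + (\<integral>\<^sup>+ x. h x * indicator (- Ffun p f) x \<partial>mu)
      = (\<integral>\<^sup>+ x\<in>Ffun p f. h x \<partial>mu) + 0"
    using E1 E2 by simp
  moreover have "(\<integral>\<^sup>+ x\<in>Ffun p f. h x \<partial>mu) \<noteq> \<infinity>" using fin E1 E2 by simp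
  ultimately have "(\<integral>\<^sup>+ x. h x * indicator (- Ffun p f) x \<partial>mu) = 0"
    by (simp add: ennreal_add_left_cancel)
  then have "AE x in mu. h x * indicator (- Ffun p f) x = 0"
    using hm Fs by (subst nn_integral_0_iff_AE[symmetric]) auto
  then have "AE x in mu. x \<notin> Ffun p f \<longrightarrow> f x = 0"
    by eventually_elim (auto simp: h_def split: split_indicator)
  with cO show ?thesis by simp
qed

lemma D2:
  fixes h :: "(nat \<Rightarrow> real) \<Rightarrow> ennreal"
  assumes J: "countable J" and hm: "h \<in> borel_measurable mu"
    and ae: "AE x in mu. x \<notin> (\<Union>a\<in>J. cube a) \<longrightarrow> h x = 0"
  defines "O' \<equiv> {a. (\<integral>\<^sup>+ x\<in>cube a. h x \<partial>mu) \<noteq> 0}"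
  shows "(\<integral>\<^sup>+ x. h x \<partial>mu) = (\<integral>\<^sup>+ a. (\<integral>\<^sup>+ x\<in>cube a. h x \<partial>mu) \<partial>count_space O')
    \<and> (\<integral>\<^sup>+ a. (\<integral>\<^sup>+ x\<in>cube a. h x \<partial>mu) \<partial>count_space O') = (\<integral>\<^sup>+ x\<in>(\<Union>a\<in>O'. cube a). h x \<partial>mu)"
proof -
  have sub: "O' \<subseteq> J"
  proof
    fix a assume aO: "a \<in> O'"
    show "a \<in> J"
    proof (rule ccontr)
      assume aJ: "a \<notin> J"
      have "AE x in mu. h x * indicator (cube a) x = 0"
        using ae
      proof eventually_elim
        case (elim x)
        show ?case
        proof (cases "x \<in> cube a")
          case True
          have "x \<notin> (\<Union>a\<in>J. cube a)"
          proof
            assume "x \<in> (\<Union>a\<in>J. cube a)"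
            then obtain b where b: "b \<in> J" "x \<in> cube b" by blast
            then have "a \<noteq> b" using aJ by auto
            then show False using cube_disj[of a b] True b(2) by auto
          qed
          then show ?thesis using elim by simp
        qed simp
      qed
      then have "(\<integral>\<^sup>+ x\<in>cube a. h x \<partial>mu) = 0"
        using hm cube_sets by (subst nn_integral_0_iff_AE) auto
      then show False using aO by (simp add: O'_def)
    qed
  qed
  then have cO: "countable O'" using J countable_subset by blast
  have "(\<integral>\<^sup>+ x. h x \<partial>mu) = (\<integral>\<^sup>+ x\<in>(\<Union>a\<in>J. cube a). h x \<partial>mu)"
    by (rule nn_integral_cong_AE) (use ae in \<open>eventually_elim, auto split: split_indicator\<close>)
  also have "\<dots> = (\<integral>\<^sup>+ a. (\<integral>\<^sup>+ x\<in>cube a. h x \<partial>mu) \<partial>count_space J)"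
    using J hm by (rule L1)
  also have "\<dots> = (\<integral>\<^sup>+ a. (\<integral>\<^sup>+ x\<in>cube a. h x \<partial>mu) \<partial>count_space O')"
    using sub
    by (subst (1 2) nn_integral_count_space_indicator)
       (auto intro!: nn_integral_cong split: split_indicator simp: O'_def)
  finally show ?thesis using L1[OF cO hm] by simp
qed

lemma G_of:
  assumes g: "g \<in> Lp p" and J: "countable J"
    and ae: "AE x in mu. x \<notin> (\<Union>a\<in>J. cube a) \<longrightarrow> g x = 0"
  shows "g \<in> Gp p"
proof -
  have gm: "g \<in> borel_measurable mu" using g by (simp add: Lp_def)
  have hm: "(\<lambda>x. ennreal (\<bar>g x\<bar> powr p)) \<in> borel_measurable mu" using gm by measurable
  have ae': "AE x in mu. x \<notin> (\<Union>a\<in>J. cube a) \<longrightarrow> ennreal (\<bar>g x\<bar> powr p) = 0"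
    using ae by eventually_elim auto
  show ?thesis using D2[OF J hm ae'] g unfolding Gp_def Ofun_def Ffun_def by simp
qed

lemma Lp_zero: "(\<lambda>x. 0) \<in> Lp p"
  unfolding Lp_def by simp

lemma Lp_add:
  assumes p: "0 \<le> p" and f: "f \<in> Lp p" and g: "g \<in> Lp p"
  shows "(\<lambda>x. f x + g x) \<in> Lp p"
proof -
  have fm: "f \<in> borel_measurable mu" and ff: "(\<integral>\<^sup>+ x. ennreal (\<bar>f x\<bar> powr p) \<partial>mu) < \<infinity>"
    using f by (auto simp: Lp_def)
  have gm: "g \<in> borel_measurable mu" and gf: "(\<integral>\<^sup>+ x. ennreal (\<bar>g x\<bar> powr p) \<partial>mu) < \<infinity>"
    using g by (auto simp: Lp_def)
  have pt: "\<bar>f x + g x\<bar> powr p \<le> 2 powr p * (\<bar>f x\<bar> powr p + \<bar>g x\<bar> powr p)" for x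
  proof -
    have "\<bar>f x + g x\<bar> powr p \<le> (2 * max \<bar>f x\<bar> \<bar>g x\<bar>) powr p"
      using p by (intro powr_mono2) auto
    also have "\<dots> = 2 powr p * max \<bar>f x\<bar> \<bar>g x\<bar> powr p" by (simp add: powr_mult)
    also have "max \<bar>f x\<bar> \<bar>g x\<bar> powr p \<le> \<bar>f x\<bar> powr p + \<bar>g x\<bar> powr p"
      by (cases "\<bar>f x\<bar> \<le> \<bar>g x\<bar>") (auto simp: max_def)
    finally show ?thesis by (simp add: mult_left_mono)
  qed
  have "(\<integral>\<^sup>+ x. ennreal (\<bar>f x + g x\<bar> powr p) \<partial>mu)
      \<le> (\<integral>\<^sup>+ x. ennreal (2 powr p) * (ennreal (\<bar>f x\<bar> powr p) + ennreal (\<bar>g x\<bar> powr p)) \<partial>mu)"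
    using pt by (intro nn_integral_mono) (simp add: ennreal_mult'[symmetric] ennreal_plus[symmetric] del: ennreal_plus)
  also have "\<dots> = ennreal (2 powr p) * ((\<integral>\<^sup>+ x. ennreal (\<bar>f x\<bar> powr p) \<partial>mu) + (\<integral>\<^sup>+ x. ennreal (\<bar>g x\<bar> powr p) \<partial>mu))"
    using fm gm by (simp add: nn_integral_cmult nn_integral_add)
  also have "\<dots> < \<infinity>" using ff gf by (simp add: ennreal_mult_less_top)
  finally show ?thesis using fm gm by (simp add: Lp_def)
qed

lemma Lp_smult:
  assumes f: "f \<in> Lp p"
  shows "(\<lambda>x. c * f x) \<in> Lp p"
proof -
  have fm: "f \<in> borel_measurable mu" and ff: "(\<integral>\<^sup>+ x. ennreal (\<bar>f x\<bar> powr p) \<partial>mu) < \<infinity>"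
    using f by (auto simp: Lp_def)
  have "(\<integral>\<^sup>+ x. ennreal (\<bar>c * f x\<bar> powr p) \<partial>mu) = (\<integral>\<^sup>+ x. ennreal (\<bar>c\<bar> powr p) * ennreal (\<bar>f x\<bar> powr p) \<partial>mu)"
    by (simp add: abs_mult powr_mult ennreal_mult')
  also have "\<dots> = ennreal (\<bar>c\<bar> powr p) * (\<integral>\<^sup>+ x. ennreal (\<bar>f x\<bar> powr p) \<partial>mu)"
    using fm by (simp add: nn_integral_cmult)
  also have "\<dots> < \<infinity>" using ff by (simp add: ennreal_mult_less_top)
  finally show ?thesis using fm by (simp add: Lp_def)
qed

theorem lemma3p3:
  fixes p :: real
  assumes "1 \<le> p"
  shows "Gp p \<subseteq> Lp p \<and> (\<lambda>x. 0) \<in> Gp p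
    \<and> (\<forall>f\<in>Gp p. \<forall>g\<in>Gp p. (\<lambda>x. f x + g x) \<in> Gp p)
    \<and> (\<forall>c::real. \<forall>f\<in>Gp p. (\<lambda>x. c * f x) \<in> Gp p)"
proof (intro conjI ballI allI)
  show "Gp p \<subseteq> Lp p" unfolding Gp_def by auto
  show "(\<lambda>x. 0) \<in> Gp p" by (rule G_of[where J="{}"]) (auto simp: Lp_zero)
next
  fix f g assume f: "f \<in> Gp p" and g: "g \<in> Gp p"
  have fL: "f \<in> Lp p" and gL: "g \<in> Lp p" using f g by (auto simp: Gp_def)
  from D1[OF f] D1[OF g] show "(\<lambda>x. f x + g x) \<in> Gp p"
  proof (intro G_of[where J="Ofun p f \<union> Ofun p g"])
    show "(\<lambda>x. f x + g x) \<in> Lp p" using Lp_add fL gL assms by simp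
  next
    assume "countable (Ofun p f) \<and> (AE x in mu. x \<notin> Ffun p f \<longrightarrow> f x = 0)"
      "countable (Ofun p g) \<and> (AE x in mu. x \<notin> Ffun p g \<longrightarrow> g x = 0)"
    then show "countable (Ofun p f \<union> Ofun p g)"
      and "AE x in mu. x \<notin> (\<Union>a\<in>Ofun p f \<union> Ofun p g. cube a) \<longrightarrow> f x + g x = 0"
      by (auto elim!: AE_mp simp: Ffun_def)
  qed
next
  fix c f assume f: "f \<in> Gp p"
  have fL: "f \<in> Lp p" using f by (auto simp: Gp_def)
  from D1[OF f] show "(\<lambda>x. c * f x) \<in> Gp p"
  proof (intro G_of[where J="Ofun p f"])
    show "(\<lambda>x. c * f x) \<in> Lp p" using Lp_smult fL by simp
  next
    assume "countable (Ofun p f) \<and> (AE x in mu. x \<notin> Ffun p f \<longrightarrow> f x = 0)"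
    then show "countable (Ofun p f)"
      and "AE x in mu. x \<notin> (\<Union>a\<in>Ofun p f. cube a) \<longrightarrow> c * f x = 0"
      by (auto elim!: AE_mp simp: Ffun_def)
  qed
qed

end
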